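(* Let $\mathcal{T}$ be a conforming simplicial mesh of a domain in $\mathbb{R}^d$ with nodes $\{\mathbf{x}_i\}$, let $F$ be a common facet of two cells $T_o$ and $T_n$, and let $\mathbf{x}^* \in F$. For a point $\mathbf{x}$ in the closure of a cell $T$, let $\mathcal{N}^1(\mathbf{x})$ be the set of 1-ring neighbours of $T$, and let $\mathcal{N}^1_o$, $\mathcal{N}^1_n$ denote these sets for $T_o$, $T_n$; put $\mathcal{N}^1_c=\mathcal{N}^1_o\cap\mathcal{N}^1_n$, $\mathcal{N}^1_r=\mathcal{N}^1_o\setminus\mathcal{N}^1_c$ (removed nodes), $\mathcal{N}^1_a=\mathcal{N}^1_n\setminus\mathcal{N}^1_c$ (added nodes). Let $d:\mathbb{R}^d\to[0,\infty)$ be a smooth compactly supported sample-weighting function and, for each node $i$, let $\eta_i$ be a diminishing function, so that the modified sample weight of node $i\in\mathcal{N}^1(\mathbf{x})$ at $\mathbf{x}$ is $d'_i(\mathbf{x})=\eta_i(\mathbf{x})\,d(\mathbf{x}_i-\mathbf{x})$. With $\mathbf{p}(\mathbf{y})=[1,\mathbf{y}^T]^T$ and fixed nodal values $u_i\in\mathbb{R}$, define $$\mathbf{M}(\mathbf{x})=\sum_{i\in\mathcal{N}^1(\mathbf{x})} d'_i(\mathbf{x})\,\mathbf{p}(\mathbf{x}_i-\mathbf{x})\mathbf{p}(\mathbf{x}_i-\mathbf{x})^T,\qquad \mathbf{b}(\mathbf{x})=\sum_{i\in\mathcal{N}^1(\mathbf{x})} d'_i(\mathbf{x})\,u_i\,\mathbf{p}(\mathbf{x}_i-\mathbf{x}),$$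 and the MLS reconstruction of the value and gradient $\begin{bmatrix}\hat u(\mathbf{x})\\ \nabla\hat u(\mathbf{x})\end{bmatrix}=\mathbf{M}(\mathbf{x})^{-1}\mathbf{b}(\mathbf{x})$. Assume: (i) for every $i\in\mathcal{N}^1_c$, $\mathbf{x}\mapsto \eta_i(\mathbf{x})d(\mathbf{x}_i-\mathbf{x})$ is smooth (in particular continuous) on a neighbourhood of $\mathbf{x}^*$ in $T_o\cup T_n$; (ii) $\eta$ is locally diminishing: there is $K>0$ such that $|\eta_i(\mathbf{x})|\le K\,\|\mathbf{x}-\mathbf{x}^*\|$ for $i\in\mathcal{N}^1_r$, $\mathbf{x}\in T_o$ and for $i\in\mathcal{N}^1_a$, $\mathbf{x}\in T_n$, near $\mathbf{x}^*$; (iii) the nodes are non-degenerate near $\mathbf{x}^*$, i.e. the minimum singular value of $\mathbf{M}(\mathbf{x})$ is bounded away from $0$ for $\mathbf{x}\in T_o\cup T_n$ near $\mathbf{x}^*$. Then both the reconstructed value $\hat u$ and the reconstructed gradient $\nabla\hat u$ are continuous across $F$ at $\mathbf{x}^*$: if $\mathbf{x}^o\in T_o$ and $\mathbf{x}^n\in T_n$ with $\|\mathbf{x}^n-\mathbf{x}^o\|=\mathcal{O}(\epsilon)$ near $\mathbf{x}^*$, then the difference of $[\hat u,\nabla\hat u^T]^T$ at $\mathbf{x}^n$ (computed with $\mathcal{N}^1_n$) and at $\mathbf{x}^o$ (computed with $\mathcal{N}^1_o$) is $\mathcal{O}(\epsilon)$. In particular, the MLS kernel values and kernel gradients (the rows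 of $\mathbf{M}^{-1}$ times the weighted basis, i.e. the case of unit nodal values $u_i=\delta_{ij}$) are continuous across cell boundaries.
   Context: The 0-ring neighbours $\mathcal{N}^0$ of a cell are its vertices; the 1-ring neighbours $\mathcal{N}^1$ of a cell are all mesh nodes that are vertices of the cell or are joined by a mesh edge to a vertex of the cell (so $\mathcal{N}^0\subset\mathcal{N}^1$). When a point moves from $T_o$ into $T_n$ through $F$, the active node set changes from $\mathcal{N}^1_o$ to $\mathcal{N}^1_n$. This is the moving-least-squares (MLS) reconstruction with complete linear polynomial basis used in the Unstructured MLS Material Point Method, with sample weights multiplied by a diminishing function $\eta$. *)

theory Defs
  imports "HOL-Analysis.Analysis"
begin

text \<open>Nodes are indexed by a type 'i, node positions are given by X. A cell is
represented by its set of vertex indices; the cell itself (as a point set) is the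
open simplex spanned by its vertices.\<close>

definition simplex_cell :: "('i \<Rightarrow> real^'d) \<Rightarrow> 'i set \<Rightarrow> bool" where
  "simplex_cell X c \<longleftrightarrow> finite c \<and> card c = CARD('d) + 1 \<and> inj_on X c
     \<and> \<not> affine_dependent (X ` c)"

definition cell_region :: "('i \<Rightarrow> real^'d) \<Rightarrow> 'i set \<Rightarrow> (real^'d) set" where
  "cell_region X c = interior (convex hull (X ` c))"

definition conforming_mesh :: "('i \<Rightarrow> real^'d) \<Rightarrow> 'i set set \<Rightarrow> bool" where
  "conforming_mesh X \<T> \<longleftrightarrow> finite \<T> \<and> \<T> \<noteq> {} \<and> inj_on X (\<Union>\<T>)
     \<and> (\<forall>c\<in>\<T>. simplex_cell X c)
     \<and> (\<forall>c1\<in>\<T>. \<forall>c2\<in>\<T>. convex hull (X ` c1) \<inter> convex hull (X ` c2)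
                             = convex hull (X ` (c1 \<inter> c2)))"

definition mesh_edge :: "'i set set \<Rightarrow> 'i \<Rightarrow> 'i \<Rightarrow> bool" where
  "mesh_edge \<T> i j \<longleftrightarrow> i \<noteq> j \<and> (\<exists>c\<in>\<T>. i \<in> c \<and> j \<in> c)"

definition ring1 :: "'i set set \<Rightarrow> 'i set \<Rightarrow> 'i set" where
  "ring1 \<T> c = c \<union> {j. \<exists>i\<in>c. mesh_edge \<T> i j}"

definition common_facet :: "('i \<Rightarrow> real^'d) \<Rightarrow> 'i set set \<Rightarrow> 'i set \<Rightarrow> 'i set
    \<Rightarrow> (real^'d) set \<Rightarrow> bool" where
  "common_facet X \<T> co cn F \<longleftrightarrow> co \<in> \<T> \<and> cn \<in> \<T> \<and> co \<noteq> cn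
     \<and> card (co \<inter> cn) = CARD('d) \<and> F = convex hull (X ` (co \<inter> cn))"

text \<open>C-infinity on an open set S: there is a family D of functions indexed by lists of
coordinate directions with D [] = f, all of them continuous on S, and D (j # js) is the
partial derivative of D js in direction j at every point of S.\<close>
definition smooth_on :: "(real^'d) set \<Rightarrow> (real^'d \<Rightarrow> real) \<Rightarrow> bool" where
  "smooth_on S f \<longleftrightarrow> open S \<and> (\<exists>D :: 'd list \<Rightarrow> real^'d \<Rightarrow> real.
      D [] = f \<and> (\<forall>js. continuous_on S (D js))
      \<and> (\<forall>js j x. x \<in> S \<longrightarrow>
           ((\<lambda>t. D js (x + t *\<^sub>R axis j 1)) has_real_derivative D (j # js) x) (at 0)))"

definition smooth_near_within :: "(real^'d) set \<Rightarrow> real^'d \<Rightarrow> (real^'d \<Rightarrow> real) \<Rightarrow> bool" where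
  "smooth_near_within A x0 f \<longleftrightarrow> (\<exists>U h. open U \<and> x0 \<in> U \<and> smooth_on U h
      \<and> (\<forall>x\<in>U \<inter> A. f x = h x))"

definition eigenvalues_mat :: "real^'n^'n \<Rightarrow> real set" where
  "eigenvalues_mat A = {e. \<exists>v. v \<noteq> 0 \<and> A *v v = e *\<^sub>R v}"

definition min_singular_value :: "real^'n^'n \<Rightarrow> real" where
  "min_singular_value A = sqrt (Min (eigenvalues_mat (transpose A ** A)))"

text \<open>p(y) = [1, y^T]^T; coordinate None is the constant entry, Some k the k-th coordinate.\<close>
definition pbasis :: "real^'d \<Rightarrow> real^('d option)" where
  "pbasis y = (\<chi> j. case j of None \<Rightarrow> 1 | Some k \<Rightarrow> y $ k)"

definition outer :: "real^'m \<Rightarrow> real^'m^'m" where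
  "outer v = (\<chi> a b. v $ a * v $ b)"

definition mod_weight :: "('i \<Rightarrow> real^'d) \<Rightarrow> (real^'d \<Rightarrow> real) \<Rightarrow> ('i \<Rightarrow> real^'d \<Rightarrow> real)
    \<Rightarrow> 'i \<Rightarrow> real^'d \<Rightarrow> real" where
  "mod_weight X w \<eta> i x = \<eta> i x * w (X i - x)"

definition mls_M :: "('i \<Rightarrow> real^'d) \<Rightarrow> (real^'d \<Rightarrow> real) \<Rightarrow> ('i \<Rightarrow> real^'d \<Rightarrow> real)
    \<Rightarrow> 'i set \<Rightarrow> real^'d \<Rightarrow> real^('d option)^('d option)" where
  "mls_M X w \<eta> N x = (\<Sum>i\<in>N. mod_weight X w \<eta> i x *\<^sub>R outer (pbasis (X i - x)))"

definition mls_b :: "('i \<Rightarrow> real^'d) \<Rightarrow> (real^'d \<Rightarrow> real) \<Rightarrow> ('i \<Rightarrow> real^'d \<Rightarrow> real)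
    \<Rightarrow> ('i \<Rightarrow> real) \<Rightarrow> 'i set \<Rightarrow> real^'d \<Rightarrow> real^('d option)" where
  "mls_b X w \<eta> u N x = (\<Sum>i\<in>N. (mod_weight X w \<eta> i x * u i) *\<^sub>R pbasis (X i - x))"

text \<open>[u_hat(x); grad u_hat(x)] = M(x)^{-1} b(x): coordinate None is the value,
coordinate Some k the k-th gradient component.\<close>
definition mls_rec :: "('i \<Rightarrow> real^'d) \<Rightarrow> (real^'d \<Rightarrow> real) \<Rightarrow> ('i \<Rightarrow> real^'d \<Rightarrow> real)
    \<Rightarrow> ('i \<Rightarrow> real) \<Rightarrow> 'i set \<Rightarrow> real^'d \<Rightarrow> real^('d option)" where
  "mls_rec X w \<eta> u N x = matrix_inv (mls_M X w \<eta> N x) *v mls_b X w \<eta> u N x"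

end

theory Submission
  imports Defs
begin


lemma matvec_bound:
  fixes A :: "real^'m^'m"
  shows "norm (A *v v) \<le> (real CARD('m) * real CARD('m)) * norm A * norm v"
proof -
  have "norm (A *v v) \<le> onorm ((*v) A) * norm v" by (rule onorm) simp
  also have "onorm ((*v) A) \<le> (\<Sum>i\<in>UNIV. \<Sum>j\<in>UNIV. \<bar>A $ i $ j\<bar>)"
    by (rule onorm_le_matrix_component_sum)
  also have "\<dots> \<le> (\<Sum>i\<in>(UNIV::'m set). \<Sum>j\<in>(UNIV::'m set). norm A)"
    apply (intro sum_mono)
    using component_le_norm_cart[of "A $ i" for i] Finite_Cartesian_Product.norm_nth_le[of A] order_trans by blast
  also have "\<dots> = (real CARD('m) * real CARD('m)) * norm A" by simp
  finally show ?thesis by (simp add: mult_right_mono)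
qed




lemma mv_scale: "(A::real^'n^'m) *v (c *\<^sub>R x) = c *\<^sub>R (A *v x)"
  using matrix_vector_mul_bounded_linear[of A]
  by (metis bounded_linear.linear linear_scale)

lemma mv_add: "(A::real^'n^'m) *v (x + y) = A *v x + A *v y"
  by (simp add: matrix_vector_right_distrib)

lemma quad_zero:
  fixes a c :: real
  assumes "\<forall>t. 0 \<le> 2*t*a + t^2*c"
  shows "a = 0"
proof (rule ccontr)
  assume "a \<noteq> 0"
  define t where "t = - a / (abs c + 1)"
  have p: "abs c + 1 > 0" by simp
  have h0: "0 \<le> 2*t*a + t^2*c" using assms by blast
  have h1: "t^2*c \<le> t^2 * (abs c+1)" by (intro mult_left_mono) auto
  have h2: "2*t*a + t^2 * (abs c+1) = - (a ^ 2) / (abs c + 1)"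
  proof -
    have "2*t*a + t^2 * (abs c+1) = (-2*a^2 + a^2) / (abs c + 1)"
      unfolding t_def using p by (simp add: power2_eq_square divide_simps)
    then show ?thesis by simp
  qed
  have "a^2/(abs c+1) > 0" using \<open>a \<noteq> 0\<close> p by simp
  with h0 h1 h2 show False by linarith
qed

lemma key_inner:
  fixes A :: "real^'n^'n"
  shows "inner ((transpose A ** A) *v v) w = inner (A *v v) (A *v w)"
proof -
  have "(transpose A ** A) *v v = transpose A *v (A *v v)"
    by (simp add: matrix_vector_mul_assoc)
  also have "\<dots> = (A *v v) v* A"
    by (metis transpose_transpose vector_transpose_matrix)
  finally show ?thesis by (simp add: dot_lmul_matrix)
qed

lemma norm_add_sq:
  fixes x y :: "'a::real_inner"
  shows "norm (x + t *\<^sub>R y)^2 = norm x^2 + 2*t*inner x y + t^2 * norm y^2"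
  unfolding power2_norm_eq_inner
  by (simp add: inner_add_left inner_add_right inner_commute algebra_simps power2_eq_square)

lemma msv_lower:
  fixes A :: "real^'n^'n"
  assumes sp: "\<sigma> > 0" and sv: "min_singular_value A \<ge> \<sigma>"
  shows "\<sigma> * norm v \<le> norm (A *v v)"
proof -
  define S where "S = transpose A ** A"
  define E where "E = eigenvalues_mat S"
  have key: "inner (S *v v) w = inner (A *v v) (A *v w)" for v w
    unfolding S_def by (rule key_inner)
  define ev where "ev e = (SOME v. v \<noteq> 0 \<and> S *v v = e *\<^sub>R v)" for e
  have ev: "ev e \<noteq> 0 \<and> S *v ev e = e *\<^sub>R ev e" if "e \<in> E" for e
  proof -
    from that obtain v where "v \<noteq> 0 \<and> S *v v = e *\<^sub>R v"
      unfolding E_def eigenvalues_mat_def by blast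
    then show ?thesis unfolding ev_def by (rule someI)
  qed
  have orth: "inner (ev e1) (ev e2) = 0" if "e1 \<in> E" "e2 \<in> E" "e1 \<noteq> e2" for e1 e2
  proof -
    have "e1 * inner (ev e1) (ev e2) = inner (S *v ev e1) (ev e2)" using ev[OF that(1)] by simp
    also have "\<dots> = inner (A *v ev e1) (A *v ev e2)" by (rule key)
    also have "\<dots> = inner (A *v ev e2) (A *v ev e1)" by (rule inner_commute)
    also have "\<dots> = inner (S *v ev e2) (ev e1)" by (rule key[symmetric])
    also have "\<dots> = e2 * inner (ev e1) (ev e2)" using ev[OF that(2)] by (simp add: inner_commute)
    finally show ?thesis using that(3) by simp
  qed
  have injev: "inj_on ev E"
  proof (rule inj_onI)
    fix e1 e2 assume h: "e1 \<in> E" "e2 \<in> E" "ev e1 = ev e2"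
    then have "e1 *\<^sub>R ev e1 = e2 *\<^sub>R ev e1" using ev[OF h(1)] ev[OF h(2)] by metis
    then show "e1 = e2" using ev[OF h(1)] by (simp add: scaleR_cancel_right)
  qed
  have finE: "finite E"
  proof -
    have "finite E \<and> card E \<le> DIM(real^'n)"
    proof (rule finite_if_finite_subsets_card_bdd)
      fix G assume G: "G \<subseteq> E" "finite G"
      have "pairwise orthogonal (ev ` G)"
        unfolding pairwise_def orthogonal_def
      proof (intro ballI impI)
        fix x y assume "x \<in> ev ` G" "y \<in> ev ` G" "x \<noteq> y"
        then obtain e1 e2 where h: "e1 \<in> G" "e2 \<in> G" "x = ev e1" "y = ev e2" by blast
        then have "e1 \<noteq> e2" using \<open>x \<noteq> y\<close> by auto
        then show "x \<bullet> y = 0" using h G(1) orth by auto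
      qed
      moreover have "0 \<notin> ev ` G"
      proof
        assume "0 \<in> ev ` G"
        then obtain e where "e \<in> G" "ev e = 0" by auto
        then show False using G(1) ev by auto
      qed
      ultimately have "independent (ev ` G)" by (rule pairwise_orthogonal_independent)
      then have "card (ev ` G) \<le> DIM(real^'n)" using independent_bound by blast
      moreover have "card (ev ` G) = card G"
        using inj_on_subset[OF injev G(1)] by (simp add: card_image)
      ultimately show "card G \<le> DIM(real^'n)" by simp
    qed
    then show ?thesis by simp
  qed
  define s where "s = sphere (0::real^'n) 1"
  have "s \<noteq> {}" unfolding s_def by simp
  moreover have "compact s" unfolding s_def by simp
  moreover have "continuous_on s (\<lambda>v. norm (A *v v)^2)"
    by (intro continuous_intros)
  ultimately obtain v0 where v0: "v0 \<in> s" "\<forall>y\<in>s. norm (A *v v0)^2 \<le> norm (A *v y)^2"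
    using continuous_attains_inf by blast
  define \<mu> where "\<mu> = norm (A *v v0)^2"
  have nv0: "norm v0 = 1" using v0(1) unfolding s_def by simp
  have hom: "\<mu> * norm z^2 \<le> norm (A *v z)^2" for z
  proof (cases "z = 0")
    case True then show ?thesis by simp
  next
    case False
    then have "(1/norm z) *\<^sub>R z \<in> s" unfolding s_def by simp
    then have "\<mu> \<le> norm (A *v ((1/norm z) *\<^sub>R z))^2" using v0 unfolding \<mu>_def by blast
    also have "\<dots> = norm (A *v z)^2 / norm z^2"
      by (simp add: mv_scale power_divide)
    finally show ?thesis using False by (simp add: field_simps)
  qed
  have eig: "inner (S *v v0 - \<mu> *\<^sub>R v0) w = 0" for w
  proof -
    have "\<forall>t. 0 \<le> 2*t*(inner (A *v v0) (A *v w) - \<mu> * inner v0 w)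
                  + t^2 * (norm (A *v w)^2 - \<mu> * norm w ^2)"
    proof
      fix t
      have "\<mu> * norm (v0 + t *\<^sub>R w)^2 \<le> norm (A *v (v0 + t *\<^sub>R w))^2" by (rule hom)
      then have "\<mu> * (norm v0^2 + 2*t*inner v0 w + t^2 * norm w^2)
          \<le> norm (A *v v0)^2 + 2*t*inner (A *v v0) (A *v w) + t^2 * norm (A *v w)^2"
        by (simp add: mv_add mv_scale norm_add_sq)
      then show "0 \<le> 2*t*(inner (A *v v0) (A *v w) - \<mu> * inner v0 w)
                  + t^2 * (norm (A *v w)^2 - \<mu> * norm w ^2)"
        using nv0 unfolding \<mu>_def by (simp add: algebra_simps)
    qed
    then have "inner (A *v v0) (A *v w) - \<mu> * inner v0 w = 0" by (rule quad_zero)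
    then show ?thesis by (simp add: inner_diff_left key)
  qed
  have "S *v v0 - \<mu> *\<^sub>R v0 = 0" using eig[of "S *v v0 - \<mu> *\<^sub>R v0"] by simp
  then have "\<mu> \<in> E" unfolding E_def eigenvalues_mat_def using nv0
    by (intro CollectI exI[of _ v0]) auto
  then have minle: "Min E \<le> \<mu>" using finE by simp
  have "\<sigma> \<le> sqrt (Min E)" using sv unfolding min_singular_value_def S_def E_def by simp
  then have "\<sigma>^2 \<le> Min E"
  proof -
    have "0 < sqrt (Min E)" using sp \<open>\<sigma> \<le> sqrt (Min E)\<close> by linarith
    then have "0 < Min E" by simp
    have "\<sigma>^2 \<le> (sqrt (Min E))^2" using sp \<open>\<sigma> \<le> sqrt (Min E)\<close> by (intro power_mono) auto
    then show ?thesis using \<open>0 < Min E\<close> by simp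
  qed
  then have "\<sigma>^2 * norm v^2 \<le> norm (A *v v)^2"
    using minle hom[of v] by (meson mult_right_mono order_trans zero_le_power2)
  then have "(\<sigma> * norm v)^2 \<le> norm (A *v v)^2" by (simp add: power_mult_distrib)
  then show ?thesis by (rule power2_le_imp_le) simp
qed




definition lipb :: "real^'d \<Rightarrow> (real^'d) set \<Rightarrow> (real^'d \<Rightarrow> 'a::real_normed_vector) \<Rightarrow> bool" where
  "lipb x0 S f \<longleftrightarrow> (\<exists>L B \<delta>. \<delta> > 0 \<and>
     (\<forall>x\<in>S. \<forall>y\<in>S. norm (x - x0) < \<delta> \<longrightarrow> norm (y - x0) < \<delta> \<longrightarrow> norm (f x - f y) \<le> L * norm (x - y))
   \<and> (\<forall>x\<in>S. norm (x - x0) < \<delta> \<longrightarrow> norm (f x) \<le> B))"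

definition vanb :: "real^'d \<Rightarrow> (real^'d) set \<Rightarrow> (real^'d \<Rightarrow> 'a::real_normed_vector) \<Rightarrow> bool" where
  "vanb x0 S f \<longleftrightarrow> (\<exists>K \<delta>. \<delta> > 0 \<and> (\<forall>x\<in>S. norm (x - x0) < \<delta> \<longrightarrow> norm (f x) \<le> K * norm (x - x0)))"

lemma lipbI:
  assumes "\<delta> > 0"
    "\<And>x y. x\<in>S \<Longrightarrow> y\<in>S \<Longrightarrow> norm (x - x0) < \<delta> \<Longrightarrow> norm (y - x0) < \<delta> \<Longrightarrow> norm (f x - f y) \<le> L * norm (x - y)"
    "\<And>x. x\<in>S \<Longrightarrow> norm (x - x0) < \<delta> \<Longrightarrow> norm (f x) \<le> B"
  shows "lipb x0 S f"
  unfolding lipb_def using assms by blast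

lemma lipbE:
  assumes "lipb x0 S f"
  obtains \<delta> L B where "\<delta> > 0" "L \<ge> 0" "B \<ge> 0"
    "\<And>x y. x\<in>S \<Longrightarrow> y\<in>S \<Longrightarrow> norm (x - x0) < \<delta> \<Longrightarrow> norm (y - x0) < \<delta> \<Longrightarrow> norm (f x - f y) \<le> L * norm (x - y)"
    "\<And>x. x\<in>S \<Longrightarrow> norm (x - x0) < \<delta> \<Longrightarrow> norm (f x) \<le> B"
proof -
  from assms obtain L B \<delta> where h: "\<delta> > 0"
    "\<forall>x\<in>S. \<forall>y\<in>S. norm (x - x0) < \<delta> \<longrightarrow> norm (y - x0) < \<delta> \<longrightarrow> norm (f x - f y) \<le> L * norm (x - y)"
    "\<forall>x\<in>S. norm (x - x0) < \<delta> \<longrightarrow> norm (f x) \<le> B" unfolding lipb_def by blast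
  show ?thesis
  proof (rule that[of \<delta> "max L 0" "max B 0"])
    fix x y assume "x\<in>S" "y\<in>S" "norm (x - x0) < \<delta>" "norm (y - x0) < \<delta>"
    then have "norm (f x - f y) \<le> L * norm (x - y)" using h by blast
    also have "\<dots> \<le> max L 0 * norm (x - y)" by (intro mult_right_mono) auto
    finally show "norm (f x - f y) \<le> max L 0 * norm (x - y)" .
  next
    fix x assume "x\<in>S" "norm (x - x0) < \<delta>"
    then show "norm (f x) \<le> max B 0" using h by force
  qed (use h in auto)
qed

lemma vanbE:
  assumes "vanb x0 S f"
  obtains \<delta> K where "\<delta> > 0" "K \<ge> 0"
    "\<And>x. x\<in>S \<Longrightarrow> norm (x - x0) < \<delta> \<Longrightarrow> norm (f x) \<le> K * norm (x - x0)"
proof -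
  from assms obtain K \<delta> where h: "\<delta> > 0"
    "\<forall>x\<in>S. norm (x - x0) < \<delta> \<longrightarrow> norm (f x) \<le> K * norm (x - x0)" unfolding vanb_def by blast
  show ?thesis
  proof (rule that[of \<delta> "max K 0"])
    fix x assume "x\<in>S" "norm (x - x0) < \<delta>"
    then have "norm (f x) \<le> K * norm (x - x0)" using h by blast
    also have "\<dots> \<le> max K 0 * norm (x - x0)" by (intro mult_right_mono) auto
    finally show "norm (f x) \<le> max K 0 * norm (x - x0)" .
  qed (use h in auto)
qed

lemma lipb_mono: "lipb x0 S f \<Longrightarrow> T \<subseteq> S \<Longrightarrow> lipb x0 T f"
  unfolding lipb_def by blast

lemma vanb_mono: "vanb x0 S f \<Longrightarrow> T \<subseteq> S \<Longrightarrow> vanb x0 T f"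
  unfolding vanb_def by blast

lemma lipb_const: "lipb x0 S (\<lambda>x. c)"
  by (rule lipbI[where \<delta>=1 and L=0 and B="norm c"]) auto

lemma lipb_ident: "lipb x0 S (\<lambda>x. x)"
proof (rule lipbI[where \<delta>=1 and L=1 and B="norm x0 + 1"])
  fix x assume "norm (x - x0) < 1"
  then show "norm x \<le> norm x0 + 1" using norm_triangle_ineq2[of x x0] by linarith
qed auto

lemma lipb_add:
  assumes "lipb x0 S f" "lipb x0 S g"
  shows "lipb x0 S (\<lambda>x. f x + g x)"
proof -
  obtain L1 B1 d1 where 1: "d1 > 0" "L1 \<ge> 0" "B1 \<ge> 0"
    "\<And>x y. x\<in>S \<Longrightarrow> y\<in>S \<Longrightarrow> norm (x - x0) < d1 \<Longrightarrow> norm (y - x0) < d1 \<Longrightarrow> norm (f x - f y) \<le> L1 * norm (x - y)"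
    "\<And>x. x\<in>S \<Longrightarrow> norm (x - x0) < d1 \<Longrightarrow> norm (f x) \<le> B1" using assms(1) by (rule lipbE) blast
  obtain L2 B2 d2 where 2: "d2 > 0" "L2 \<ge> 0" "B2 \<ge> 0"
    "\<And>x y. x\<in>S \<Longrightarrow> y\<in>S \<Longrightarrow> norm (x - x0) < d2 \<Longrightarrow> norm (y - x0) < d2 \<Longrightarrow> norm (g x - g y) \<le> L2 * norm (x - y)"
    "\<And>x. x\<in>S \<Longrightarrow> norm (x - x0) < d2 \<Longrightarrow> norm (g x) \<le> B2" using assms(2) by (rule lipbE) blast
  show ?thesis
  proof (rule lipbI[where \<delta>="min d1 d2" and L="L1 + L2" and B="B1 + B2"])
    fix x y assume h: "x\<in>S" "y\<in>S" "norm (x - x0) < min d1 d2" "norm (y - x0) < min d1 d2"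
    have "norm (f x + g x - (f y + g y)) \<le> norm (f x - f y) + norm (g x - g y)"
      by (metis add_diff_add norm_triangle_ineq)
    also have "\<dots> \<le> L1 * norm (x - y) + L2 * norm (x - y)"
      using 1(4)[of x y] 2(4)[of x y] h by simp
    finally show "norm (f x + g x - (f y + g y)) \<le> (L1 + L2) * norm (x - y)" by (simp add: algebra_simps)
  next
    fix x assume h: "x\<in>S" "norm (x - x0) < min d1 d2"
    have "norm (f x + g x) \<le> norm (f x) + norm (g x)" by (rule norm_triangle_ineq)
    also have "\<dots> \<le> B1 + B2" using 1(5)[of x] 2(5)[of x] h by simp
    finally show "norm (f x + g x) \<le> B1 + B2" .
  qed (use 1 2 in auto)
qed

lemma lipb_sum:
  assumes "finite N" "\<forall>i\<in>N. lipb x0 S (f i)"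
  shows "lipb x0 S (\<lambda>x. \<Sum>i\<in>N. f i x)"
  using assms
proof (induction N rule: finite_induct)
  case empty then show ?case using lipb_const[of x0 S 0] by simp
next
  case (insert i N)
  then show ?case using lipb_add[of x0 S "f i" "\<lambda>x. \<Sum>i\<in>N. f i x"] by simp
qed

lemma vanb_add:
  assumes "vanb x0 S f" "vanb x0 S g"
  shows "vanb x0 S (\<lambda>x. f x + g x)"
proof -
  obtain K1 d1 where 1: "d1 > 0" "K1 \<ge> 0"
    "\<And>x. x\<in>S \<Longrightarrow> norm (x - x0) < d1 \<Longrightarrow> norm (f x) \<le> K1 * norm (x - x0)" using assms(1) by (rule vanbE) blast
  obtain K2 d2 where 2: "d2 > 0" "K2 \<ge> 0"
    "\<And>x. x\<in>S \<Longrightarrow> norm (x - x0) < d2 \<Longrightarrow> norm (g x) \<le> K2 * norm (x - x0)" using assms(2) by (rule vanbE) blast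
  have "\<forall>x\<in>S. norm (x - x0) < min d1 d2 \<longrightarrow> norm (f x + g x) \<le> (K1 + K2) * norm (x - x0)"
  proof (intro ballI impI)
    fix x assume h: "x\<in>S" "norm (x - x0) < min d1 d2"
    have "norm (f x + g x) \<le> norm (f x) + norm (g x)" by (rule norm_triangle_ineq)
    also have "\<dots> \<le> K1 * norm (x - x0) + K2 * norm (x - x0)" using 1(3)[of x] 2(3)[of x] h by simp
    finally show "norm (f x + g x) \<le> (K1 + K2) * norm (x - x0)" by (simp add: algebra_simps)
  qed
  then show ?thesis unfolding vanb_def using 1 2 by (intro exI[of _ "K1+K2"] exI[of _ "min d1 d2"]) auto
qed

lemma vanb_sum:
  assumes "finite N" "\<forall>i\<in>N. vanb x0 S (f i)"
  shows "vanb x0 S (\<lambda>x. \<Sum>i\<in>N. f i x)"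
  using assms
proof (induction N rule: finite_induct)
  case empty then show ?case unfolding vanb_def by (intro exI[of _ 0] exI[of _ 1]) auto
next
  case (insert i N)
  then show ?case using vanb_add[of x0 S "f i" "\<lambda>x. \<Sum>i\<in>N. f i x"] by simp
qed

lemma lipb_bil:
  fixes pr :: "'a::real_normed_vector \<Rightarrow> 'b::real_normed_vector \<Rightarrow> 'c::real_normed_vector"
  assumes bb: "bounded_bilinear pr" and "lipb x0 S f" "lipb x0 S g"
  shows "lipb x0 S (\<lambda>x. pr (f x) (g x))"
proof -
  interpret bounded_bilinear pr by (rule bb)
  obtain K where K: "K > 0" "\<And>a b. norm (pr a b) \<le> norm a * norm b * K" using pos_bounded by blast
  obtain L1 B1 d1 where 1: "d1 > 0" "L1 \<ge> 0" "B1 \<ge> 0"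
    "\<And>x y. x\<in>S \<Longrightarrow> y\<in>S \<Longrightarrow> norm (x - x0) < d1 \<Longrightarrow> norm (y - x0) < d1 \<Longrightarrow> norm (f x - f y) \<le> L1 * norm (x - y)"
    "\<And>x. x\<in>S \<Longrightarrow> norm (x - x0) < d1 \<Longrightarrow> norm (f x) \<le> B1" using assms(2) by (rule lipbE) blast
  obtain L2 B2 d2 where 2: "d2 > 0" "L2 \<ge> 0" "B2 \<ge> 0"
    "\<And>x y. x\<in>S \<Longrightarrow> y\<in>S \<Longrightarrow> norm (x - x0) < d2 \<Longrightarrow> norm (y - x0) < d2 \<Longrightarrow> norm (g x - g y) \<le> L2 * norm (x - y)"
    "\<And>x. x\<in>S \<Longrightarrow> norm (x - x0) < d2 \<Longrightarrow> norm (g x) \<le> B2" using assms(3) by (rule lipbE) blast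
  show ?thesis
  proof (rule lipbI[where \<delta>="min d1 d2" and L="(L1 * B2 + B1 * L2) * K" and B="B1 * B2 * K"])
    fix x y assume h: "x\<in>S" "y\<in>S" "norm (x - x0) < min d1 d2" "norm (y - x0) < min d1 d2"
    have eq: "pr (f x) (g x) - pr (f y) (g y) = pr (f x - f y) (g x) + pr (f y) (g x - g y)"
      by (simp add: diff_left diff_right)
    have a: "norm (pr (f x - f y) (g x)) \<le> (L1 * norm (x - y)) * B2 * K"
    proof -
      have "norm (pr (f x - f y) (g x)) \<le> norm (f x - f y) * norm (g x) * K" by (rule K(2))
      also have "\<dots> \<le> (L1 * norm (x - y)) * B2 * K"
        using 1(4)[of x y] 2(5)[of x] h K(1) 1(2) by (intro mult_right_mono mult_mono) auto
      finally show ?thesis .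
    qed
    have b: "norm (pr (f y) (g x - g y)) \<le> B1 * (L2 * norm (x - y)) * K"
    proof -
      have "norm (pr (f y) (g x - g y)) \<le> norm (f y) * norm (g x - g y) * K" by (rule K(2))
      also have "\<dots> \<le> B1 * (L2 * norm (x - y)) * K"
        using 1(5)[of y] 2(4)[of x y] h K(1) 1(3) by (intro mult_right_mono mult_mono) auto
      finally show ?thesis .
    qed
    have "norm (pr (f x) (g x) - pr (f y) (g y))
        \<le> norm (pr (f x - f y) (g x)) + norm (pr (f y) (g x - g y))"
      unfolding eq by (rule norm_triangle_ineq)
    also have "\<dots> \<le> (L1 * B2 + B1 * L2) * K * norm (x - y)"
      using a b by (simp add: algebra_simps)
    finally show "norm (pr (f x) (g x) - pr (f y) (g y)) \<le> (L1 * B2 + B1 * L2) * K * norm (x - y)" .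
  next
    fix x assume h: "x\<in>S" "norm (x - x0) < min d1 d2"
    have "norm (pr (f x) (g x)) \<le> norm (f x) * norm (g x) * K" by (rule K(2))
    also have "\<dots> \<le> B1 * B2 * K"
      using 1(5)[of x] 2(5)[of x] h K(1) 1(3) by (intro mult_right_mono mult_mono) auto
    finally show "norm (pr (f x) (g x)) \<le> B1 * B2 * K" .
  qed (use 1 2 in auto)
qed

lemma vanb_bil:
  fixes pr :: "'a::real_normed_vector \<Rightarrow> 'b::real_normed_vector \<Rightarrow> 'c::real_normed_vector"
  assumes bb: "bounded_bilinear pr" and "vanb x0 S f" "lipb x0 S g"
  shows "vanb x0 S (\<lambda>x. pr (f x) (g x))"
proof -
  interpret bounded_bilinear pr by (rule bb)
  obtain K where K: "K > 0" "\<And>a b. norm (pr a b) \<le> norm a * norm b * K" using pos_bounded by blast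
  obtain K1 d1 where 1: "d1 > 0" "K1 \<ge> 0"
    "\<And>x. x\<in>S \<Longrightarrow> norm (x - x0) < d1 \<Longrightarrow> norm (f x) \<le> K1 * norm (x - x0)" using assms(2) by (rule vanbE) blast
  obtain L2 B2 d2 where 2: "d2 > 0" "L2 \<ge> 0" "B2 \<ge> 0"
    "\<And>x y. x\<in>S \<Longrightarrow> y\<in>S \<Longrightarrow> norm (x - x0) < d2 \<Longrightarrow> norm (y - x0) < d2 \<Longrightarrow> norm (g x - g y) \<le> L2 * norm (x - y)"
    "\<And>x. x\<in>S \<Longrightarrow> norm (x - x0) < d2 \<Longrightarrow> norm (g x) \<le> B2" using assms(3) by (rule lipbE) blast
  have "\<forall>x\<in>S. norm (x - x0) < min d1 d2 \<longrightarrow> norm (pr (f x) (g x)) \<le> (K1 * B2 * K) * norm (x - x0)"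
  proof (intro ballI impI)
    fix x assume h: "x\<in>S" "norm (x - x0) < min d1 d2"
    have "norm (pr (f x) (g x)) \<le> norm (f x) * norm (g x) * K" by (rule K(2))
    also have "\<dots> \<le> (K1 * norm (x - x0)) * B2 * K"
      using 1(3)[of x] 2(5)[of x] h K(1) 1(2) by (intro mult_right_mono mult_mono) auto
    finally show "norm (pr (f x) (g x)) \<le> (K1 * B2 * K) * norm (x - x0)" by (simp add: algebra_simps)
  qed
  then show ?thesis unfolding vanb_def using 1 2 by (intro exI[of _ "K1 * B2 * K"] exI[of _ "min d1 d2"]) auto
qed

lemma lipb_lin:
  assumes "bounded_linear h" "lipb x0 S f"
  shows "lipb x0 S (\<lambda>x. h (f x))"
proof -
  have "bounded_bilinear (\<lambda>(a::real) v. a *\<^sub>R h v)"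
    using bounded_bilinear.comp[OF bounded_bilinear_scaleR bounded_linear_ident assms(1)] by simp
  then have "lipb x0 S (\<lambda>x. (1::real) *\<^sub>R h (f x))"
    using lipb_bil[of "\<lambda>(a::real) v. a *\<^sub>R h v" x0 S "\<lambda>x. 1" f] lipb_const assms(2) by blast
  then show ?thesis by simp
qed

lemma lipb_diff:
  assumes "lipb x0 S f" "lipb x0 S g"
  shows "lipb x0 S (\<lambda>x. f x - g x)"
proof -
  have "lipb x0 S (\<lambda>x. f x + (- g x))"
    using lipb_add[OF assms(1) lipb_lin[OF bounded_linear_minus[OF bounded_linear_ident] assms(2)]] by simp
  then show ?thesis by simp
qed




lemma mvt_abs:
  fixes \<phi> :: "real \<Rightarrow> real"
  assumes der: "\<And>s. min 0 t \<le> s \<Longrightarrow> s \<le> max 0 t \<Longrightarrow> DERIV \<phi> s :> \<phi>' s"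
    and bd: "\<And>s. min 0 t \<le> s \<Longrightarrow> s \<le> max 0 t \<Longrightarrow> \<bar>\<phi>' s\<bar> \<le> M"
  shows "\<bar>\<phi> t - \<phi> 0\<bar> \<le> M * \<bar>t\<bar>"
proof (cases "t = 0")
  case True then show ?thesis by simp
next
  case False
  show ?thesis
  proof (cases "t > 0")
    case True
    obtain z where z: "0 < z" "z < t" "\<phi> t - \<phi> 0 = (t - 0) * \<phi>' z"
      using MVT2[of 0 t \<phi> \<phi>'] True der by auto
    have "\<bar>\<phi>' z\<bar> \<le> M" using bd z True by auto
    then show ?thesis using z True by (simp add: abs_mult mult.commute mult_left_mono)
  next
    case False
    then have tn: "t < 0" using \<open>t \<noteq> 0\<close> by simp
    obtain z where z: "t < z" "z < 0" "\<phi> 0 - \<phi> t = (0 - t) * \<phi>' z"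
      using MVT2[of t 0 \<phi> \<phi>'] tn der by auto
    have "\<bar>\<phi>' z\<bar> \<le> M" using bd z tn by auto
    then show ?thesis using z tn by (simp add: abs_mult mult.commute mult_left_mono abs_minus_commute)
  qed
qed

lemma smooth_lipb:
  fixes h :: "real^'d \<Rightarrow> real"
  assumes sm: "smooth_on U h" and x0: "x0 \<in> U"
  shows "lipb x0 UNIV h"
proof -
  from sm obtain D :: "'d list \<Rightarrow> real^'d \<Rightarrow> real" where
    oU: "open U" and D0: "D [] = h" and Dc: "\<And>js. continuous_on U (D js)"
    and Dd: "\<And>js j x. x \<in> U \<Longrightarrow> ((\<lambda>t. D js (x + t *\<^sub>R axis j 1)) has_real_derivative D (j # js) x) (at 0)"
    unfolding smooth_on_def by blast
  obtain e where e: "e > 0" "cball x0 e \<subseteq> U" using oU x0 open_contains_cball by blast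
  define r where "r = e / (real CARD('d) + 1)"
  have r: "r > 0" unfolding r_def using e by simp
  define Q where "Q = cbox (x0 - (\<chi> k. r)) (x0 + (\<chi> k. r))"
  have memQ: "x \<in> Q \<longleftrightarrow> (\<forall>k. \<bar>x$k - x0$k\<bar> \<le> r)" for x
    unfolding Q_def mem_box_cart by (auto simp: abs_le_iff) (metis add.commute diff_le_eq le_diff_eq)+
  have QU: "Q \<subseteq> U"
  proof
    fix x assume "x \<in> Q"
    have "norm (x - x0) \<le> (\<Sum>k\<in>UNIV. \<bar>(x - x0)$k\<bar>)" by (rule norm_le_l1_cart)
    also have "\<dots> \<le> (\<Sum>k\<in>(UNIV::'d set). r)"
      using \<open>x \<in> Q\<close> memQ by (intro sum_mono) simp
    also have "\<dots> = real CARD('d) * r" by simp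
    also have "\<dots> \<le> e" unfolding r_def using e by (simp add: field_simps)
    finally show "x \<in> U" using e(2) by (simp add: dist_norm norm_minus_commute subset_iff)
  qed
  have cQ: "compact Q" unfolding Q_def by simp
  have "Q \<noteq> {}" using memQ[of x0] r by auto
  have "continuous_on Q (\<lambda>x. \<Sum>k\<in>UNIV. \<bar>D [k] x\<bar>)"
    using Dc QU by (intro continuous_intros) (auto intro: continuous_on_subset)
  then have "bounded ((\<lambda>x. \<Sum>k\<in>UNIV. \<bar>D [k] x\<bar>) ` Q)"
    using cQ compact_continuous_image compact_imp_bounded by blast
  then obtain M where M: "\<And>x. x \<in> Q \<Longrightarrow> \<bar>\<Sum>k\<in>UNIV. \<bar>D [k] x\<bar>\<bar> \<le> M"
    unfolding bounded_iff by auto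
  have Mk: "\<bar>D [k] x\<bar> \<le> M" if "x \<in> Q" for x k
  proof -
    have "\<bar>D [k] x\<bar> \<le> (\<Sum>k\<in>UNIV. \<bar>D [k] x\<bar>)"
      by (rule member_le_sum) auto
    also have "\<dots> \<le> M" using M[OF that] by simp
    finally show ?thesis .
  qed
  have "continuous_on Q h" using Dc[of "[]"] D0 QU by (auto intro: continuous_on_subset)
  then have "bounded (h ` Q)" using cQ compact_continuous_image compact_imp_bounded by blast
  then obtain B where B: "\<And>x. x \<in> Q \<Longrightarrow> norm (h x) \<le> B" unfolding bounded_iff by auto
  have step: "\<bar>h (z + t *\<^sub>R axis k 1) - h z\<bar> \<le> M * \<bar>t\<bar>"
    if zQ: "z \<in> Q" and ztQ: "z + t *\<^sub>R axis k 1 \<in> Q" for z t k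
  proof -
    define \<phi> where "\<phi> s = h (z + s *\<^sub>R axis k 1)" for s
    have inQ: "z + s *\<^sub>R axis k 1 \<in> Q" if "min 0 t \<le> s" "s \<le> max 0 t" for s
      unfolding memQ
    proof
      fix j
      show "\<bar>(z + s *\<^sub>R axis k 1) $ j - x0 $ j\<bar> \<le> r"
      proof (cases "j = k")
        case True
        have a: "\<bar>z$k - x0$k\<bar> \<le> r" using zQ memQ by blast
        have b: "\<bar>z$k + t - x0$k\<bar> \<le> r" using ztQ memQ[of "z + t *\<^sub>R axis k 1"] by (simp add: axis_def) (drule spec[of _ k], simp)
        show ?thesis using True a b that by (auto simp: axis_def abs_le_iff)
      next
        case False
        then show ?thesis using zQ memQ by (simp add: axis_def)
      qed
    qed
    show ?thesis
    proof -
      have "\<bar>\<phi> t - \<phi> 0\<bar> \<le> M * \<bar>t\<bar>"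
      proof (rule mvt_abs[where \<phi>' = "\<lambda>s. D [k] (z + s *\<^sub>R axis k 1)"])
        fix s assume s: "min 0 t \<le> s" "s \<le> max 0 t"
        have d: "((\<lambda>\<tau>. D [] ((z + s *\<^sub>R axis k 1) + \<tau> *\<^sub>R axis k 1)) has_real_derivative
                D [k] (z + s *\<^sub>R axis k 1)) (at 0)"
          using Dd[of "z + s *\<^sub>R axis k 1" "[]" k] inQ[OF s] QU by blast
        have eq: "(\<lambda>\<tau>. D [] ((z + s *\<^sub>R axis k 1) + \<tau> *\<^sub>R axis k 1)) = (\<lambda>\<tau>. \<phi> (\<tau> + s))"
          unfolding \<phi>_def D0 by (simp add: algebra_simps scaleR_add_left)
        show "DERIV \<phi> s :> D [k] (z + s *\<^sub>R axis k 1)"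
          using d unfolding eq using DERIV_shift[of \<phi> _ 0 s] by simp
        show "\<bar>D [k] (z + s *\<^sub>R axis k 1)\<bar> \<le> M" using Mk inQ[OF s] by blast
      qed
      then show ?thesis unfolding \<phi>_def by simp
    qed
  qed
  define mix where "mix J x y = (\<chi> k. if k \<in> J then y$k else x$k)" for J and x y :: "real^'d"
  have mixQ: "mix J x y \<in> Q" if "x \<in> Q" "y \<in> Q" for J x y
    using that unfolding memQ mix_def by auto
  have mixb: "\<bar>h (mix J x y) - h x\<bar> \<le> M * (\<Sum>k\<in>J. \<bar>y$k - x$k\<bar>)"
    if "x \<in> Q" "y \<in> Q" for J x y
  proof -
    have "finite J" by simp
    then show ?thesis
    proof (induction J rule: finite_induct)
      case empty
      have "mix {} x y = x" unfolding mix_def by (simp add: vec_eq_iff)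
      then show ?case by simp
    next
      case (insert k J)
      have eq: "mix (insert k J) x y = mix J x y + (y$k - x$k) *\<^sub>R axis k 1"
        using insert(2) unfolding mix_def by (auto simp: vec_eq_iff axis_def)
      have "\<bar>h (mix (insert k J) x y) - h (mix J x y)\<bar> \<le> M * \<bar>y$k - x$k\<bar>"
        using step[of "mix J x y" "y$k - x$k" k] mixQ[OF that] eq by metis
      then have "\<bar>h (mix (insert k J) x y) - h x\<bar> \<le> M * \<bar>y$k - x$k\<bar> + M * (\<Sum>k\<in>J. \<bar>y$k - x$k\<bar>)"
        using insert(3) by linarith
      then show ?case using insert(1,2) by (simp add: algebra_simps)
    qed
  qed
  have M0: "M \<ge> 0" using Mk[of x0 undefined] memQ[of x0] r by force
  have ballQ: "x \<in> Q" if "norm (x - x0) < r" for x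
    unfolding memQ
  proof
    fix k
    have "\<bar>(x - x0)$k\<bar> \<le> norm (x - x0)" by (rule component_le_norm_cart)
    then show "\<bar>x$k - x0$k\<bar> \<le> r" using that by simp
  qed
  show ?thesis
  proof (rule lipbI[where \<delta>=r and L="M * real CARD('d)" and B=B])
    fix x y :: "real^'d" assume h: "norm (x - x0) < r" "norm (y - x0) < r"
    have xQ: "x \<in> Q" using h(1) ballQ by blast
    have yQ: "y \<in> Q" using h(2) ballQ by blast
    have "mix UNIV y x = x" unfolding mix_def by (simp add: vec_eq_iff)
    then have "\<bar>h x - h y\<bar> \<le> M * (\<Sum>k\<in>UNIV. \<bar>x$k - y$k\<bar>)" using mixb[OF yQ xQ, of UNIV] by simp
    also have "\<dots> \<le> M * (\<Sum>k\<in>(UNIV::'d set). norm (x - y))"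
      using M0 component_le_norm_cart[of "x - y"] by (intro mult_left_mono sum_mono) auto
    finally show "norm (h x - h y) \<le> M * real CARD('d) * norm (x - y)" by simp
  next
    fix x :: "real^'d" assume h: "norm (x - x0) < r"
    have xQ: "x \<in> Q" using h(1) ballQ by blast
    then show "norm (h x) \<le> B" using B by blast
  qed (use r in auto)
qed




definition plin :: "real^'d \<Rightarrow> real^('d option)" where
  "plin y = (\<chi> j. case j of None \<Rightarrow> 0 | Some k \<Rightarrow> y $ k)"

lemma pbasis_split: "pbasis y = pbasis 0 + plin y"
  unfolding pbasis_def plin_def by (simp add: vec_eq_iff split: option.split)

lemma plin_bl: "bounded_linear plin"
proof -
  have "linear plin"
    unfolding plin_def by (rule linearI) (simp_all add: vec_eq_iff split: option.split)
  then show ?thesis by (simp add: linear_conv_bounded_linear)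
qed

definition bil :: "real^'m \<Rightarrow> real^'m \<Rightarrow> real^'m^'m" where
  "bil a b = (\<chi> i j. a $ i * b $ j)"

lemma bil_bb: "bounded_bilinear bil"
proof -
  have "bilinear bil"
    unfolding bilinear_def bil_def
    by (auto intro!: linearI simp: vec_eq_iff algebra_simps)
  then show ?thesis by (simp add: bilinear_conv_bounded_bilinear)
qed

lemma outer_bil: "outer v = bil v v"
  unfolding outer_def bil_def by simp

lemma lipb_pb: "lipb x0 S (\<lambda>x. pbasis (p - x))"
proof -
  have "lipb x0 S (\<lambda>x. p - x)" by (intro lipb_diff lipb_const lipb_ident)
  then have "lipb x0 S (\<lambda>x. plin (p - x))" by (rule lipb_lin[OF plin_bl])
  then have "lipb x0 S (\<lambda>x. pbasis 0 + plin (p - x))" by (intro lipb_add lipb_const)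
  then show ?thesis by (subst pbasis_split) simp
qed

lemma lipb_outer: "lipb x0 S (\<lambda>x. outer (pbasis (p - x)))"
  unfolding outer_bil by (rule lipb_bil[OF bil_bb lipb_pb lipb_pb])

lemma lipb_upb: "lipb x0 S (\<lambda>x. c *\<^sub>R pbasis (p - x))"
  by (rule lipb_bil[OF bounded_bilinear_scaleR lipb_const lipb_pb])

lemma lipb_w:
  assumes "smooth_on UNIV w"
  shows "lipb x0 S (\<lambda>x. w (p - x))"
proof -
  have "lipb (p - x0) UNIV w" using smooth_lipb[OF assms] by simp
  then obtain \<delta> L B where h: "\<delta> > 0"
    "\<And>x y. norm (x - (p - x0)) < \<delta> \<Longrightarrow> norm (y - (p - x0)) < \<delta> \<Longrightarrow> norm (w x - w y) \<le> L * norm (x - y)"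
    "\<And>x. norm (x - (p - x0)) < \<delta> \<Longrightarrow> norm (w x) \<le> B"
    by (rule lipbE) auto
  have e: "norm ((p - x) - (p - x0)) = norm (x - x0)" for x
  proof -
    have "(p - x) - (p - x0) = -(x - x0)" by simp
    then show ?thesis by (simp only: norm_minus_cancel)
  qed
  show ?thesis
  proof (rule lipbI[where \<delta>=\<delta> and L=L and B=B])
    fix x y assume "norm (x - x0) < \<delta>" "norm (y - x0) < \<delta>"
    then have "norm ((p - x) - (p - x0)) < \<delta>" "norm ((p - y) - (p - x0)) < \<delta>" using e by auto
    then have "norm (w (p - x) - w (p - y)) \<le> L * norm ((p - x) - (p - y))" by (rule h(2))
    then show "norm (w (p - x) - w (p - y)) \<le> L * norm (x - y)"
      by (simp add: norm_minus_commute)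
  next
    fix x assume "norm (x - x0) < \<delta>"
    then show "norm (w (p - x)) \<le> B" using h(3) e by simp
  qed (use h in auto)
qed

lemma jump:
  fixes Fc Fa Fr :: "real^'d \<Rightarrow> 'a::real_normed_vector"
  assumes "lipb xs S Fc" "vanb xs Tn Fa" "vanb xs To Fr" "To \<subseteq> S" "Tn \<subseteq> S"
  shows "\<exists>C B \<delta>. \<delta> > 0 \<and> C \<ge> 0 \<and> (\<forall>\<epsilon> xo xn. xo \<in> To \<and> xn \<in> Tn \<and> \<epsilon> < \<delta>
      \<and> norm (xo - xs) \<le> \<epsilon> \<and> norm (xn - xs) \<le> \<epsilon> \<longrightarrow>
      norm ((Fc xn + Fa xn) - (Fc xo + Fr xo)) \<le> C * \<epsilon> \<and> norm (Fc xo + Fr xo) \<le> B)"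
proof -
  obtain d1 L B1 where 1: "d1 > 0" "L \<ge> 0" "B1 \<ge> 0"
    "\<And>x y. x\<in>S \<Longrightarrow> y\<in>S \<Longrightarrow> norm (x - xs) < d1 \<Longrightarrow> norm (y - xs) < d1 \<Longrightarrow> norm (Fc x - Fc y) \<le> L * norm (x - y)"
    "\<And>x. x\<in>S \<Longrightarrow> norm (x - xs) < d1 \<Longrightarrow> norm (Fc x) \<le> B1" using assms(1) by (rule lipbE) blast
  obtain d2 K2 where 2: "d2 > 0" "K2 \<ge> 0"
    "\<And>x. x\<in>Tn \<Longrightarrow> norm (x - xs) < d2 \<Longrightarrow> norm (Fa x) \<le> K2 * norm (x - xs)" using assms(2) by (rule vanbE) blast
  obtain d3 K3 where 3: "d3 > 0" "K3 \<ge> 0"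
    "\<And>x. x\<in>To \<Longrightarrow> norm (x - xs) < d3 \<Longrightarrow> norm (Fr x) \<le> K3 * norm (x - xs)" using assms(3) by (rule vanbE) blast
  define \<delta> where "\<delta> = min d1 (min d2 d3)"
  have "\<forall>\<epsilon> xo xn. xo \<in> To \<and> xn \<in> Tn \<and> \<epsilon> < \<delta>
      \<and> norm (xo - xs) \<le> \<epsilon> \<and> norm (xn - xs) \<le> \<epsilon> \<longrightarrow>
      norm ((Fc xn + Fa xn) - (Fc xo + Fr xo)) \<le> (2 * L + K2 + K3) * \<epsilon> \<and> norm (Fc xo + Fr xo) \<le> B1 + K3 * \<delta>"
  proof (intro allI impI)
    fix \<epsilon> xo xn assume H: "xo \<in> To \<and> xn \<in> Tn \<and> \<epsilon> < \<delta> \<and> norm (xo - xs) \<le> \<epsilon> \<and> norm (xn - xs) \<le> \<epsilon>"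
    then have h: "xo \<in> To" "xn \<in> Tn" "\<epsilon> < \<delta>" "norm (xo - xs) \<le> \<epsilon>" "norm (xn - xs) \<le> \<epsilon>" by auto
    have lt: "norm (xo - xs) < \<delta>" "norm (xn - xs) < \<delta>" using h by auto
    have c: "norm (Fc xn - Fc xo) \<le> L * norm (xn - xo)"
      using 1(4)[of xn xo] h assms(4,5) lt unfolding \<delta>_def by auto
    have "norm (xn - xo) \<le> norm (xn - xs) + norm (xo - xs)"
      using norm_triangle_ineq4[of "xn - xs" "xo - xs"] by simp
    then have "norm (xn - xo) \<le> 2 * \<epsilon>" using h by simp
    then have "L * norm (xn - xo) \<le> L * (2 * \<epsilon>)" using 1(2) by (rule mult_left_mono)
    then have c': "norm (Fc xn - Fc xo) \<le> 2 * L * \<epsilon>" using c by simp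
    have "norm (Fa xn) \<le> K2 * norm (xn - xs)" using 2(3)[of xn] h lt unfolding \<delta>_def by simp
    moreover have "K2 * norm (xn - xs) \<le> K2 * \<epsilon>" using h 2(2) by (simp add: mult_left_mono)
    ultimately have a: "norm (Fa xn) \<le> K2 * \<epsilon>" by linarith
    have "norm (Fr xo) \<le> K3 * norm (xo - xs)" using 3(3)[of xo] h lt unfolding \<delta>_def by simp
    moreover have "K3 * norm (xo - xs) \<le> K3 * \<epsilon>" using h 3(2) by (simp add: mult_left_mono)
    ultimately have r: "norm (Fr xo) \<le> K3 * \<epsilon>" by linarith
    have eq: "(Fc xn + Fa xn) - (Fc xo + Fr xo) = (Fc xn - Fc xo) + Fa xn - Fr xo" by (simp add: algebra_simps)
    have "norm ((Fc xn + Fa xn) - (Fc xo + Fr xo)) \<le> norm (Fc xn - Fc xo) + norm (Fa xn) + norm (Fr xo)"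
      unfolding eq using norm_triangle_ineq[of "Fc xn - Fc xo" "Fa xn"] norm_triangle_ineq4[of "Fc xn - Fc xo + Fa xn" "Fr xo"]
      by linarith
    then have G1: "norm ((Fc xn + Fa xn) - (Fc xo + Fr xo)) \<le> (2 * L + K2 + K3) * \<epsilon>"
      using c' a r by (simp add: algebra_simps)
    have "norm (Fc xo) \<le> B1" using 1(5)[of xo] h assms(4) lt unfolding \<delta>_def by auto
    moreover have "K3 * \<epsilon> \<le> K3 * \<delta>" using h 3(2) by (simp add: mult_left_mono)
    ultimately have "norm (Fc xo + Fr xo) \<le> B1 + K3 * \<delta>" using r norm_triangle_ineq[of "Fc xo" "Fr xo"]
      by linarith
    with G1 show "norm ((Fc xn + Fa xn) - (Fc xo + Fr xo)) \<le> (2 * L + K2 + K3) * \<epsilon> \<and> norm (Fc xo + Fr xo) \<le> B1 + K3 * \<delta>" by blast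
  qed
  moreover have "\<delta> > 0" "2 * L + K2 + K3 \<ge> 0" using 1 2 3 unfolding \<delta>_def by auto
  ultimately show ?thesis by blast
qed




lemma family:
  fixes g :: "'i \<Rightarrow> real^'d \<Rightarrow> real" and Q :: "'i \<Rightarrow> real^'d \<Rightarrow> 'a::real_normed_vector"
  assumes fo: "finite No" and fn: "finite Nn"
    and c: "\<forall>i\<in>No \<inter> Nn. lipb xs S (g i)"
    and r: "\<forall>i\<in>No - No \<inter> Nn. vanb xs To (g i)"
    and a: "\<forall>i\<in>Nn - No \<inter> Nn. vanb xs Tn (g i)"
    and q: "\<forall>i. lipb xs UNIV (Q i)" and so: "To \<subseteq> S" and sn: "Tn \<subseteq> S"
  shows "\<exists>C B \<delta>. \<delta> > 0 \<and> C \<ge> 0 \<and> (\<forall>\<epsilon> xo xn. xo \<in> To \<and> xn \<in> Tn \<and> \<epsilon> < \<delta>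
      \<and> norm (xo - xs) \<le> \<epsilon> \<and> norm (xn - xs) \<le> \<epsilon> \<longrightarrow>
      norm ((\<Sum>i\<in>Nn. g i xn *\<^sub>R Q i xn) - (\<Sum>i\<in>No. g i xo *\<^sub>R Q i xo)) \<le> C * \<epsilon>
      \<and> norm (\<Sum>i\<in>No. g i xo *\<^sub>R Q i xo) \<le> B)"
proof -
  define t where "t i x = g i x *\<^sub>R Q i x" for i x
  define Fc where "Fc x = (\<Sum>i\<in>No \<inter> Nn. t i x)" for x
  define Fa where "Fa x = (\<Sum>i\<in>Nn - No \<inter> Nn. t i x)" for x
  define Fr where "Fr x = (\<Sum>i\<in>No - No \<inter> Nn. t i x)" for x
  have "lipb xs S Fc" unfolding Fc_def t_def
    using fo c q by (intro lipb_sum ballI lipb_bil[OF bounded_bilinear_scaleR]) (auto intro: lipb_mono)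
  moreover have "vanb xs Tn Fa" unfolding Fa_def t_def
    using fn a q by (intro vanb_sum ballI vanb_bil[OF bounded_bilinear_scaleR]) (auto intro: lipb_mono)
  moreover have "vanb xs To Fr" unfolding Fr_def t_def
    using fo r q by (intro vanb_sum ballI vanb_bil[OF bounded_bilinear_scaleR]) (auto intro: lipb_mono)
  ultimately obtain C B \<delta> where J: "\<delta> > 0" "C \<ge> 0" "\<forall>\<epsilon> xo xn. xo \<in> To \<and> xn \<in> Tn \<and> \<epsilon> < \<delta>
      \<and> norm (xo - xs) \<le> \<epsilon> \<and> norm (xn - xs) \<le> \<epsilon> \<longrightarrow>
      norm ((Fc xn + Fa xn) - (Fc xo + Fr xo)) \<le> C * \<epsilon> \<and> norm (Fc xo + Fr xo) \<le> B"
    using jump[OF _ _ _ so sn] by blast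
  have sn': "(\<Sum>i\<in>Nn. t i x) = Fc x + Fa x" for x
    unfolding Fc_def Fa_def using sum.subset_diff[of "No \<inter> Nn" Nn "\<lambda>i. t i x"] fn by (simp add: add.commute)
  have so': "(\<Sum>i\<in>No. t i x) = Fc x + Fr x" for x
    unfolding Fc_def Fr_def using sum.subset_diff[of "No \<inter> Nn" No "\<lambda>i. t i x"] fo by (simp add: add.commute)
  show ?thesis using J unfolding t_def[symmetric] sn' so' by blast
qed

lemma lipb_agree:
  assumes "lipb x0 UNIV h" "open U" "x0 \<in> U" "\<forall>x\<in>U \<inter> S. f x = h x"
  shows "lipb x0 S f"
proof -
  obtain \<delta> L B where h: "\<delta> > 0"
    "\<And>x y. norm (x - x0) < \<delta> \<Longrightarrow> norm (y - x0) < \<delta> \<Longrightarrow> norm (h x - h y) \<le> L * norm (x - y)"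
    "\<And>x. norm (x - x0) < \<delta> \<Longrightarrow> norm (h x) \<le> B"
    using assms(1) by (rule lipbE) auto
  obtain e where e: "e > 0" "ball x0 e \<subseteq> U" using assms(2,3) open_contains_ball by blast
  have inU: "x \<in> U" if "norm (x - x0) < e" for x
    using that e(2) by (auto simp: dist_norm norm_minus_commute subset_iff)
  show ?thesis
  proof (rule lipbI[where \<delta>="min \<delta> e" and L=L and B=B])
    fix x y assume "x \<in> S" "y \<in> S" "norm (x - x0) < min \<delta> e" "norm (y - x0) < min \<delta> e"
    then show "norm (f x - f y) \<le> L * norm (x - y)" using h(2)[of x y] inU[of x] inU[of y] assms(4) by auto
  next
    fix x assume "x \<in> S" "norm (x - x0) < min \<delta> e"
    then show "norm (f x) \<le> B" using h(3)[of x] inU[of x] assms(4) by auto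
  qed (use h e in auto)
qed

lemma inv_apply:
  fixes A :: "real^'n^'n"
  assumes "\<sigma> > 0" "\<And>v. \<sigma> * norm v \<le> norm (A *v v)"
  shows "A *v (matrix_inv A *v y) = y"
proof -
  have "inj ((*v) A)"
  proof (rule injI)
    fix x y assume "A *v x = A *v y"
    then have "A *v (x - y) = 0" by (simp add: matrix_vector_mult_diff_distrib)
    then have "\<sigma> * norm (x - y) \<le> 0" using assms(2)[of "x - y"] by simp
    then show "x = y" using assms(1) by (simp add: mult_le_0_iff)
  qed
  then have "invertible A" using matrix_left_invertible_injective invertible_left_inverse by blast
  then have "A ** matrix_inv A = mat 1 \<and> matrix_inv A ** A = mat 1"
    unfolding invertible_def matrix_inv_def by (rule someI_ex)
  then show ?thesis by (simp add: matrix_vector_mul_assoc)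
qed




lemma ring1_sub:
  assumes "c \<in> T"
  shows "ring1 T c \<subseteq> \<Union>T"
  using assms unfolding ring1_def mesh_edge_def by blast

lemma mls_b_alt: "mls_b X w \<eta> u N x = (\<Sum>i\<in>N. mod_weight X w \<eta> i x *\<^sub>R (u i *\<^sub>R pbasis (X i - x)))"
  unfolding mls_b_def by simp

theorem mainTheorem1:
  fixes X :: "'i \<Rightarrow> real^'d"
    and \<T> :: "'i set set"
    and co cn :: "'i set"
    and F :: "(real^'d) set"
    and xs :: "real^'d"
    and w :: "real^'d \<Rightarrow> real"
    and \<eta> :: "'i \<Rightarrow> real^'d \<Rightarrow> real"
    and u :: "'i \<Rightarrow> real"
  defines "To \<equiv> cell_region X co"
    and "Tn \<equiv> cell_region X cn"
    and "No \<equiv> ring1 \<T> co"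
    and "Nn \<equiv> ring1 \<T> cn"
  assumes mesh: "conforming_mesh X \<T>"
    and facet: "common_facet X \<T> co cn F"
    and xs_F: "xs \<in> F"
    and w_nonneg: "\<forall>y. w y \<ge> 0"
    and w_smooth: "smooth_on UNIV w"
    and w_supp: "compact (closure {y. w y \<noteq> 0})"
    and common_smooth: "\<forall>i \<in> No \<inter> Nn.
          smooth_near_within (To \<union> Tn) xs (\<lambda>x. \<eta> i x * w (X i - x))"
    and diminishing: "\<exists>K>0. \<exists>\<delta>>0.
          (\<forall>i \<in> No - (No \<inter> Nn). \<forall>x \<in> To. norm (x - xs) < \<delta> \<longrightarrow> \<bar>\<eta> i x\<bar> \<le> K * norm (x - xs))
        \<and> (\<forall>i \<in> Nn - (No \<inter> Nn). \<forall>x \<in> Tn. norm (x - xs) < \<delta> \<longrightarrow> \<bar>\<eta> i x\<bar> \<le> K * norm (x - xs))"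
    and nondegenerate: "\<exists>\<sigma>>0. \<exists>\<delta>>0.
          (\<forall>x \<in> To. norm (x - xs) < \<delta> \<longrightarrow> min_singular_value (mls_M X w \<eta> No x) \<ge> \<sigma>)
        \<and> (\<forall>x \<in> Tn. norm (x - xs) < \<delta> \<longrightarrow> min_singular_value (mls_M X w \<eta> Nn x) \<ge> \<sigma>)"
  shows "\<exists>C>0. \<exists>\<delta>>0. \<forall>\<epsilon> xo xn. xo \<in> To \<and> xn \<in> Tn \<and> \<epsilon> < \<delta>
            \<and> norm (xo - xs) \<le> \<epsilon> \<and> norm (xn - xs) \<le> \<epsilon> \<longrightarrow>
            norm (mls_rec X w \<eta> u Nn xn - mls_rec X w \<eta> u No xo) \<le> C * \<epsilon>"
proof -
  define S where "S = To \<union> Tn"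
  define g where "g i x = mod_weight X w \<eta> i x" for i x
  have finU: "finite (\<Union>\<T>)"
    using mesh unfolding conforming_mesh_def simplex_cell_def by auto
  have fo: "finite No" unfolding No_def
    using facet finU ring1_sub unfolding common_facet_def by (meson finite_subset)
  have fn: "finite Nn" unfolding Nn_def
    using facet finU ring1_sub unfolding common_facet_def by (meson finite_subset)
  have c: "\<forall>i\<in>No \<inter> Nn. lipb xs S (g i)"
  proof
    fix i assume "i \<in> No \<inter> Nn"
    then obtain U h where Uh: "open U" "xs \<in> U" "smooth_on U h" "\<forall>x\<in>U \<inter> S. \<eta> i x * w (X i - x) = h x"
      using common_smooth unfolding smooth_near_within_def S_def by blast
    show "lipb xs S (g i)"
      by (rule lipb_agree[OF smooth_lipb[OF Uh(3) Uh(2)] Uh(1) Uh(2)])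
        (use Uh(4) in \<open>simp add: g_def mod_weight_def\<close>)
  qed
  obtain K d0 where K: "K > 0" "d0 > 0"
    "\<forall>i \<in> No - (No \<inter> Nn). \<forall>x \<in> To. norm (x - xs) < d0 \<longrightarrow> \<bar>\<eta> i x\<bar> \<le> K * norm (x - xs)"
    "\<forall>i \<in> Nn - (No \<inter> Nn). \<forall>x \<in> Tn. norm (x - xs) < d0 \<longrightarrow> \<bar>\<eta> i x\<bar> \<le> K * norm (x - xs)"
    using diminishing by blast
  have r: "\<forall>i\<in>No - No \<inter> Nn. vanb xs To (g i)"
  proof
    fix i assume i: "i \<in> No - No \<inter> Nn"
    have "vanb xs To (\<eta> i)" unfolding vanb_def using K(2,3) i by (intro exI[of _ K] exI[of _ d0]) auto
    then have "vanb xs To (\<lambda>x. \<eta> i x * w (X i - x))"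
      by (rule vanb_bil[OF bounded_bilinear_mult _ lipb_w[OF w_smooth]])
    then show "vanb xs To (g i)" unfolding g_def mod_weight_def .
  qed
  have a: "\<forall>i\<in>Nn - No \<inter> Nn. vanb xs Tn (g i)"
  proof
    fix i assume i: "i \<in> Nn - No \<inter> Nn"
    have "vanb xs Tn (\<eta> i)" unfolding vanb_def using K(2,4) i by (intro exI[of _ K] exI[of _ d0]) auto
    then have "vanb xs Tn (\<lambda>x. \<eta> i x * w (X i - x))"
      by (rule vanb_bil[OF bounded_bilinear_mult _ lipb_w[OF w_smooth]])
    then show "vanb xs Tn (g i)" unfolding g_def mod_weight_def .
  qed
  have so: "To \<subseteq> S" and sn: "Tn \<subseteq> S" unfolding S_def by auto
  obtain CM BM dM where M: "dM > 0" "CM \<ge> 0" "\<forall>\<epsilon> xo xn. xo \<in> To \<and> xn \<in> Tn \<and> \<epsilon> < dM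
      \<and> norm (xo - xs) \<le> \<epsilon> \<and> norm (xn - xs) \<le> \<epsilon> \<longrightarrow>
      norm (mls_M X w \<eta> Nn xn - mls_M X w \<eta> No xo) \<le> CM * \<epsilon>"
    using family[OF fo fn c r a _ so sn, of "\<lambda>i x. outer (pbasis (X i - x))"] lipb_outer
    unfolding mls_M_def g_def by blast
  obtain Cb Bb db where b: "db > 0" "Cb \<ge> 0" "\<forall>\<epsilon> xo xn. xo \<in> To \<and> xn \<in> Tn \<and> \<epsilon> < db
      \<and> norm (xo - xs) \<le> \<epsilon> \<and> norm (xn - xs) \<le> \<epsilon> \<longrightarrow>
      norm (mls_b X w \<eta> u Nn xn - mls_b X w \<eta> u No xo) \<le> Cb * \<epsilon> \<and> norm (mls_b X w \<eta> u No xo) \<le> Bb"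
    using family[OF fo fn c r a _ so sn, of "\<lambda>i x. u i *\<^sub>R pbasis (X i - x)"] lipb_upb
    unfolding mls_b_alt g_def by blast
  obtain \<sigma> ds where sg: "\<sigma> > 0" "ds > 0"
    "\<forall>x \<in> To. norm (x - xs) < ds \<longrightarrow> min_singular_value (mls_M X w \<eta> No x) \<ge> \<sigma>"
    "\<forall>x \<in> Tn. norm (x - xs) < ds \<longrightarrow> min_singular_value (mls_M X w \<eta> Nn x) \<ge> \<sigma>"
    using nondegenerate by blast
  define K2 where "K2 = real CARD('d option) * real CARD('d option)"
  have K2: "K2 \<ge> 0" unfolding K2_def by simp
  define \<delta> where "\<delta> = min dM (min db ds)"
  define C where "C = (Cb + K2 * CM * (max Bb 0) / \<sigma>) / \<sigma> + 1"
  have Cpos: "C > 0" unfolding C_def using sg(1) b(2) M(2) K2 by (simp add: add_nonneg_pos)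
  have "\<forall>\<epsilon> xo xn. xo \<in> To \<and> xn \<in> Tn \<and> \<epsilon> < \<delta>
            \<and> norm (xo - xs) \<le> \<epsilon> \<and> norm (xn - xs) \<le> \<epsilon> \<longrightarrow>
            norm (mls_rec X w \<eta> u Nn xn - mls_rec X w \<eta> u No xo) \<le> C * \<epsilon>"
  proof (intro allI impI)
    fix \<epsilon> xo xn assume H: "xo \<in> To \<and> xn \<in> Tn \<and> \<epsilon> < \<delta> \<and> norm (xo - xs) \<le> \<epsilon> \<and> norm (xn - xs) \<le> \<epsilon>"
    then have h: "xo \<in> To" "xn \<in> Tn" "\<epsilon> < \<delta>" "norm (xo - xs) \<le> \<epsilon>" "norm (xn - xs) \<le> \<epsilon>" by auto
    have e0: "\<epsilon> \<ge> 0" using h(4) norm_ge_zero order_trans by blast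
    define Mn where "Mn = mls_M X w \<eta> Nn xn"
    define Mo where "Mo = mls_M X w \<eta> No xo"
    define bn where "bn = mls_b X w \<eta> u Nn xn"
    define bo where "bo = mls_b X w \<eta> u No xo"
    have dM: "norm (Mn - Mo) \<le> CM * \<epsilon>" using M(3) h unfolding Mn_def Mo_def \<delta>_def by auto
    have db: "norm (bn - bo) \<le> Cb * \<epsilon>" "norm bo \<le> Bb" using b(3) h unfolding bn_def bo_def \<delta>_def by auto
    have lds: "norm (xn - xs) < ds" "norm (xo - xs) < ds" using h unfolding \<delta>_def by auto
    have "min_singular_value Mn \<ge> \<sigma>" using sg(4) h(2) lds(1) unfolding Mn_def by blast
    then have sn: "\<sigma> * norm v \<le> norm (Mn *v v)" for v by (rule msv_lower[OF sg(1)])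
    have "min_singular_value Mo \<ge> \<sigma>" using sg(3) h(1) lds(2) unfolding Mo_def by blast
    then have so: "\<sigma> * norm v \<le> norm (Mo *v v)" for v by (rule msv_lower[OF sg(1)])
    define an where "an = matrix_inv Mn *v bn"
    define ao where "ao = matrix_inv Mo *v bo"
    have an: "Mn *v an = bn" unfolding an_def by (rule inv_apply[OF sg(1) sn])
    have ao: "Mo *v ao = bo" unfolding ao_def by (rule inv_apply[OF sg(1) so])
    have "\<sigma> * norm ao \<le> max Bb 0" using so[of ao] ao db(2) by simp
    then have nao: "norm ao \<le> max Bb 0 / \<sigma>" using sg(1) by (simp add: field_simps)
    have eq: "Mn *v (an - ao) = (bn - bo) + (Mo - Mn) *v ao"
      using an ao by (simp add: matrix_vector_mult_diff_distrib matrix_vector_mult_diff_rdistrib)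
    have "\<sigma> * norm (an - ao) \<le> norm (Mn *v (an - ao))" by (rule sn)
    also have "\<dots> \<le> norm (bn - bo) + norm ((Mo - Mn) *v ao)" unfolding eq by (rule norm_triangle_ineq)
    also have "norm ((Mo - Mn) *v ao) \<le> K2 * norm (Mo - Mn) * norm ao"
      unfolding K2_def by (rule matvec_bound)
    also have "K2 * norm (Mo - Mn) * norm ao \<le> K2 * (CM * \<epsilon>) * (max Bb 0 / \<sigma>)"
      using dM nao K2 M(2) e0 by (intro mult_mono mult_left_mono) (auto simp: norm_minus_commute)
    finally have "\<sigma> * norm (an - ao) \<le> Cb * \<epsilon> + K2 * (CM * \<epsilon>) * (max Bb 0 / \<sigma>)"
      using db(1) by linarith
    then have "norm (an - ao) \<le> (Cb * \<epsilon> + K2 * (CM * \<epsilon>) * (max Bb 0 / \<sigma>)) / \<sigma>"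
      using sg(1) by (simp add: field_simps)
    also have "\<dots> = ((Cb + K2 * CM * (max Bb 0) / \<sigma>) / \<sigma>) * \<epsilon>"
      by (simp add: field_simps)
    also have "\<dots> \<le> C * \<epsilon>" unfolding C_def using e0 by (intro mult_right_mono) auto
    finally show "norm (mls_rec X w \<eta> u Nn xn - mls_rec X w \<eta> u No xo) \<le> C * \<epsilon>"
      unfolding mls_rec_def an_def ao_def Mn_def Mo_def bn_def bo_def .
  qed
  moreover have "\<delta> > 0" unfolding \<delta>_def using M(1) b(1) sg(2) by simp
  ultimately show ?thesis using Cpos by blast
qed


end
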